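(* Let $\mathbf T$ be a countable homogeneous tournament and $\mathbf T^*$ an expansion of $\mathbf T$ as in the context such that $\mathrm{Age}(\mathbf T^* )$ has the Ramsey property. Then for every positive integer $n$, the class $\mathrm{Age}(I_n[\mathbf T]^* )$ has the Ramsey property.
   Context: For relational structures $\mathbf A,\mathbf B$ in the same language, $\binom{\mathbf B}{\mathbf A}$ denotes the set of substructures of $\mathbf B$ isomorphic to $\mathbf A$. For $k\ge 1$, $\mathbf C\to(\mathbf B)^{\mathbf A}_k$ means: for every map $c:\binom{\mathbf C}{\mathbf A}\to[k]=\{0,\dots,k-1\}$ there is $\mathbf B'\in\binom{\mathbf C}{\mathbf B}$ such that $c$ is constant on $\binom{\mathbf B'}{\mathbf A}$. A class $\mathcal K$ of finite structures has the Ramsey property if for all $k\ge1$ and all $\mathbf A,\mathbf B\in\mathcal K$ there is $\mathbf C\in\mathcal K$ with $\mathbf C\to(\mathbf B)^{\mathbf A}_k$. The age $\mathrm{Age}(\mathbf F)$ of a structure $\mathbf F$ is the class of finite structures embeddable in $\mathbf F$. A tournament is a directed graph in which every pair of distinct vertices carries exactly one directed edge; it is homogeneous if every isomorphism between finite substructures extends to an automorphism. $\mathbf T=(T,E^{\mathbf T})$ is a countable homogeneous tournament, and $\mathbf T^*$ is an expansion of $\mathbf T$ to a countable relational language $L_{\mathbf T^*}\supseteq\{E,<\}$ in which $<$ is interpreted as a linear order $<^*$ on $T$. For a positive integer $n$, $[n]=\{0,\dots,n-1\}$. The structure $I_n[\mathbf T]^*$ has universe $[n]\times T$ and language $L_{\mathbf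 T^*}\cup\{P_0,\dots,P_{n-1}\}$ ($P_i$ new unary symbols), interpreted as: for each $m$-ary $R\in L_{\mathbf T^*}\setminus\{<\}$ (including $E$), $R((k_1,x_1),\dots,(k_m,x_m))$ iff $k_1=\dots=k_m$ and $R^{\mathbf T^*}(x_1,\dots,x_m)$; $(i,x)<(j,y)$ iff $i<j$, or $i=j$ and $x<^*y$; and $P_i=\{i\}\times T$. (Thus its $\{E\}$-reduct $I_n[\mathbf T]$ is the disjoint union of $n$ copies of $\mathbf T$ with no edges between copies.) *)

theory Defs
  imports Main "HOL-Library.Countable_Set"
begin

text \<open>A language is given by a set
  L of symbols and an arity function ar; only tuples of the right length consisting
  of elements of the universe are ever consulted.\<close>

type_synonym ('a, 'r) struct = "'a set \<times> ('r \<Rightarrow> 'a list \<Rightarrow> bool)"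

definition univ :: "('a, 'r) struct \<Rightarrow> 'a set" where
  "univ A = fst A"

definition rel :: "('a, 'r) struct \<Rightarrow> 'r \<Rightarrow> 'a list \<Rightarrow> bool" where
  "rel A = snd A"

definition induced :: "('a, 'r) struct \<Rightarrow> 'a set \<Rightarrow> ('a, 'r) struct" where
  "induced A S = (S, rel A)"

definition is_iso :: "'r set \<Rightarrow> ('r \<Rightarrow> nat) \<Rightarrow> ('a, 'r) struct \<Rightarrow> ('b, 'r) struct \<Rightarrow> ('a \<Rightarrow> 'b) \<Rightarrow> bool" where
  "is_iso L ar A B f \<longleftrightarrow> bij_betw f (univ A) (univ B) \<and>
     (\<forall>R\<in>L. \<forall>xs. length xs = ar R \<and> set xs \<subseteq> univ A \<longrightarrow>
        (rel A R xs \<longleftrightarrow> rel B R (map f xs)))"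

definition isomorphic :: "'r set \<Rightarrow> ('r \<Rightarrow> nat) \<Rightarrow> ('a, 'r) struct \<Rightarrow> ('b, 'r) struct \<Rightarrow> bool" where
  "isomorphic L ar A B \<longleftrightarrow> (\<exists>f. is_iso L ar A B f)"

definition is_embedding :: "'r set \<Rightarrow> ('r \<Rightarrow> nat) \<Rightarrow> ('a, 'r) struct \<Rightarrow> ('b, 'r) struct \<Rightarrow> ('a \<Rightarrow> 'b) \<Rightarrow> bool" where
  "is_embedding L ar A B f \<longleftrightarrow> inj_on f (univ A) \<and> f ` univ A \<subseteq> univ B \<and>
     (\<forall>R\<in>L. \<forall>xs. length xs = ar R \<and> set xs \<subseteq> univ A \<longrightarrow>
        (rel A R xs \<longleftrightarrow> rel B R (map f xs)))"

text \<open>Age: the finite structures embeddable in F.  Finite structures are taken with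
  universe a finite set of natural numbers (every finite structure is isomorphic to one).\<close>
definition Age :: "'r set \<Rightarrow> ('r \<Rightarrow> nat) \<Rightarrow> ('a, 'r) struct \<Rightarrow> (nat, 'r) struct set" where
  "Age L ar F = {A. finite (univ A) \<and> (\<exists>f. is_embedding L ar A F f)}"

text \<open>binom C A: substructures of C isomorphic to A, identified with their universes.\<close>
definition binom :: "'r set \<Rightarrow> ('r \<Rightarrow> nat) \<Rightarrow> ('a, 'r) struct \<Rightarrow> ('b, 'r) struct \<Rightarrow> 'a set set" where
  "binom L ar C A = {S. S \<subseteq> univ C \<and> isomorphic L ar (induced C S) A}"

definition arrows :: "'r set \<Rightarrow> ('r \<Rightarrow> nat) \<Rightarrow> ('a, 'r) struct \<Rightarrow> ('b, 'r) struct \<Rightarrow> ('c, 'r) struct \<Rightarrow> nat \<Rightarrow> bool" where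
  "arrows L ar C B A k \<longleftrightarrow>
     (\<forall>c :: 'a set \<Rightarrow> nat. (\<forall>S\<in>binom L ar C A. c S < k) \<longrightarrow>
        (\<exists>B'\<in>binom L ar C B. \<exists>i. \<forall>S\<in>binom L ar (induced C B') A. c S = i))"

definition ramsey_property :: "'r set \<Rightarrow> ('r \<Rightarrow> nat) \<Rightarrow> ('a, 'r) struct set \<Rightarrow> bool" where
  "ramsey_property L ar K \<longleftrightarrow>
     (\<forall>k::nat. k \<ge> 1 \<longrightarrow> (\<forall>A\<in>K. \<forall>B\<in>K. \<exists>C\<in>K. arrows L ar C B A k))"

definition tournament :: "'r \<Rightarrow> ('a, 'r) struct \<Rightarrow> bool" where
  "tournament E T \<longleftrightarrow>
     (\<forall>x\<in>univ T. \<not> rel T E [x, x]) \<and>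
     (\<forall>x\<in>univ T. \<forall>y\<in>univ T. x \<noteq> y \<longrightarrow> (rel T E [x, y] \<longleftrightarrow> \<not> rel T E [y, x]))"

definition homogeneous :: "'r set \<Rightarrow> ('r \<Rightarrow> nat) \<Rightarrow> ('a, 'r) struct \<Rightarrow> bool" where
  "homogeneous L ar F \<longleftrightarrow>
     (\<forall>S1 S2 f. finite S1 \<and> finite S2 \<and> S1 \<subseteq> univ F \<and> S2 \<subseteq> univ F \<and>
        is_iso L ar (induced F S1) (induced F S2) f \<longrightarrow>
        (\<exists>g. is_iso L ar F F g \<and> (\<forall>x\<in>S1. g x = f x)))"

definition linear_order_rel :: "'r \<Rightarrow> ('a, 'r) struct \<Rightarrow> bool" where
  "linear_order_rel lt T \<longleftrightarrow>
     (\<forall>x\<in>univ T. \<not> rel T lt [x, x]) \<and>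
     (\<forall>x\<in>univ T. \<forall>y\<in>univ T. \<forall>z\<in>univ T. rel T lt [x, y] \<and> rel T lt [y, z] \<longrightarrow> rel T lt [x, z]) \<and>
     (\<forall>x\<in>univ T. \<forall>y\<in>univ T. x \<noteq> y \<longrightarrow> rel T lt [x, y] \<or> rel T lt [y, x])"

text \<open>The language of I_n[T]^*: the symbols of L (as Inl) plus unary P_i = Inr i, i < n.\<close>
definition In_lang :: "'r set \<Rightarrow> nat \<Rightarrow> ('r + nat) set" where
  "In_lang L n = Inl ` L \<union> Inr ` {..<n}"

definition In_ar :: "('r \<Rightarrow> nat) \<Rightarrow> ('r + nat) \<Rightarrow> nat" where
  "In_ar ar = case_sum ar (\<lambda>_. 1)"

definition In_struct :: "'r \<Rightarrow> nat \<Rightarrow> ('a, 'r) struct \<Rightarrow> (nat \<times> 'a, 'r + nat) struct" where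
  "In_struct lt n T =
    ({..<n} \<times> univ T,
     \<lambda>s xs. case s of
        Inl R \<Rightarrow>
          (if R = lt then
             (case xs of [p, q] \<Rightarrow> fst p < fst q \<or> (fst p = fst q \<and> rel T lt [snd p, snd q])
                       | _ \<Rightarrow> False)
           else (\<forall>p\<in>set xs. \<forall>q\<in>set xs. fst p = fst q) \<and> rel T R (map snd xs))
      | Inr i \<Rightarrow> (case xs of [p] \<Rightarrow> fst p = i | _ \<Rightarrow> False))"

end

theory Submission
  imports Defs "HOL-Library.FuncSet"
begin

lemma univ_induced[simp]: "univ (induced A S) = S" by (simp add: induced_def univ_def)
lemma rel_induced[simp]: "rel (induced A S) = rel A" by (simp add: induced_def rel_def)
lemma induced_induced[simp]: "induced (induced A X) Y = induced A Y"
  by (simp add: induced_def rel_def)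

lemma is_iso_inv:
  assumes "is_iso L ar A B f"
  shows "is_iso L ar B A (the_inv_into (univ A) f)"
proof -
  let ?h = "the_inv_into (univ A) f"
  have bij: "bij_betw f (univ A) (univ B)" using assms by (simp add: is_iso_def)
  have bh: "bij_betw ?h (univ B) (univ A)" using bij by (rule bij_betw_the_inv_into)
  show ?thesis unfolding is_iso_def
  proof (intro conjI bh ballI allI impI)
    fix R ys assume R: "R \<in> L" and ys: "length ys = ar R \<and> set ys \<subseteq> univ B"
    have 1: "map f (map ?h ys) = ys"
    proof (unfold map_map, rule map_idI)
      fix y assume "y \<in> set ys"
      then have "y \<in> univ B" using ys by blast
      then show "(f \<circ> ?h) y = y" using f_the_inv_into_f_bij_betw[OF bij] by simp
    qed
    have 2: "set (map ?h ys) \<subseteq> univ A" using ys bh by (auto simp: bij_betw_def)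
    have rel_iff: "\<And>R xs. R \<in> L \<Longrightarrow> length xs = ar R \<Longrightarrow> set xs \<subseteq> univ A \<Longrightarrow> rel A R xs \<longleftrightarrow> rel B R (map f xs)"
      using assms unfolding is_iso_def by blast
    have "rel A R (map ?h ys) \<longleftrightarrow> rel B R (map f (map ?h ys))"
      using rel_iff[OF R _ 2] ys by simp
    then show "rel B R ys \<longleftrightarrow> rel A R (map ?h ys)" using 1 by simp
  qed
qed

lemma is_iso_comp:
  assumes "is_iso L ar A B f" "is_iso L ar B C g"
  shows "is_iso L ar A C (g \<circ> f)"
  unfolding is_iso_def
proof (intro conjI ballI allI impI)
  show "bij_betw (g \<circ> f) (univ A) (univ C)"
    using bij_betw_trans[of f "univ A" "univ B" g "univ C"] assms by (simp add: is_iso_def)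
  fix R xs assume R: "R \<in> L" and xs: "length xs = ar R \<and> set xs \<subseteq> univ A"
  have "set (map f xs) \<subseteq> univ B" using xs assms(1) by (auto simp: is_iso_def bij_betw_def)
  moreover have "\<And>R xs. R \<in> L \<Longrightarrow> length xs = ar R \<Longrightarrow> set xs \<subseteq> univ A \<Longrightarrow> rel A R xs \<longleftrightarrow> rel B R (map f xs)"
    using assms(1) unfolding is_iso_def by blast
  moreover have "\<And>R xs. R \<in> L \<Longrightarrow> length xs = ar R \<Longrightarrow> set xs \<subseteq> univ B \<Longrightarrow> rel B R xs \<longleftrightarrow> rel C R (map g xs)"
    using assms(2) unfolding is_iso_def by blast
  ultimately show "rel A R xs = rel C R (map (g \<circ> f) xs)"
    using R xs by simp
qed

lemma isomorphic_sym: "isomorphic L ar A B \<Longrightarrow> isomorphic L ar B A"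
  unfolding isomorphic_def using is_iso_inv by blast

lemma isomorphic_trans: "isomorphic L ar A B \<Longrightarrow> isomorphic L ar B C \<Longrightarrow> isomorphic L ar A C"
  unfolding isomorphic_def using is_iso_comp by blast

lemma binom_cong_iso: assumes h: "isomorphic L ar A A'" shows "binom L ar C A = binom L ar C A'"
  unfolding binom_def by (rule Collect_cong) (meson h isomorphic_trans isomorphic_sym)

lemma arrows_cong_iso:
  assumes "arrows L ar C B A k" "isomorphic L ar B B'" "isomorphic L ar A A'"
  shows "arrows L ar C B' A' k"
  using assms(1) unfolding arrows_def
  by (simp add: binom_cong_iso[OF assms(2), symmetric] binom_cong_iso[OF assms(3), symmetric])

lemma is_iso_restrict:
  assumes "is_iso L ar C C' g" "S \<subseteq> univ C"
  shows "is_iso L ar (induced C S) (induced C' (g ` S)) g"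
  using assms unfolding is_iso_def
  by (auto simp: bij_betw_def intro: inj_on_subset)

lemma arrows_transfer:
  assumes g: "is_iso L ar C C' g" and ar: "arrows L ar C B A k"
  shows "arrows L ar C' B A k"
  unfolding arrows_def
proof (intro allI impI)
  fix c'
  assume c': "\<forall>S\<in>binom L ar C' A. c' S < k"
  have bij: "bij_betw g (univ C) (univ C')" using g by (simp add: is_iso_def)
  have img: "g ` S \<in> binom L ar C' X" if S: "S \<subseteq> univ C" and SX: "isomorphic L ar (induced C S) X" for S X
  proof -
    have "isomorphic L ar (induced C S) (induced C' (g ` S))"
      using is_iso_restrict[OF g S] unfolding isomorphic_def by blast
    then have "isomorphic L ar (induced C' (g ` S)) X" using isomorphic_trans[OF isomorphic_sym SX] by blast
    moreover have "g ` S \<subseteq> univ C'" using S bij by (auto simp: bij_betw_def)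
    ultimately show ?thesis by (simp add: binom_def)
  qed
  define c where "c S = c' (g ` S)" for S
  have "\<forall>S\<in>binom L ar C A. c S < k"
  proof
    fix S assume "S \<in> binom L ar C A"
    then have "g ` S \<in> binom L ar C' A" by (intro img) (auto simp: binom_def)
    then show "c S < k" using c' unfolding c_def by blast
  qed
  then obtain B' i where B': "B' \<in> binom L ar C B"
    and Bi: "\<forall>S\<in>binom L ar (induced C B') A. c S = i"
    using ar unfolding arrows_def by blast
  have B'sub: "B' \<subseteq> univ C" using B' by (simp add: binom_def)
  show "\<exists>B'\<in>binom L ar C' B. \<exists>i. \<forall>S\<in>binom L ar (induced C' B') A. c' S = i"
  proof (intro bexI exI ballI)
    show "g ` B' \<in> binom L ar C' B" using B' by (intro img) (auto simp: binom_def)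
    fix T' assume T': "T' \<in> binom L ar (induced C' (g ` B')) A"
    define T where "T = {x\<in>B'. g x \<in> T'}"
    have gT: "g ` T = T'" using T' unfolding T_def binom_def by auto
    have TB: "T \<subseteq> B'" unfolding T_def by auto
    have i1: "isomorphic L ar (induced C T) (induced C' T')"
      using is_iso_restrict[OF g, of T] TB B'sub gT unfolding isomorphic_def by auto
    then have "isomorphic L ar (induced C T) A"
    proof -
      have i2: "isomorphic L ar (induced C' T') A" using T' by (simp add: binom_def)
      show ?thesis using isomorphic_trans[OF i1 i2] .
    qed
    then have "T \<in> binom L ar (induced C B') A" using TB by (simp add: binom_def)
    then show "c' T' = i" using Bi gT unfolding c_def by auto
  qed
qed

lemma embedding_iso:
  assumes "is_embedding L ar A F e"
  shows "is_iso L ar A (induced F (e ` univ A)) e"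
  using assms unfolding is_embedding_def is_iso_def by (auto simp: bij_betw_def)

lemma finite_sub_in_Age:
  assumes "finite X" "X \<subseteq> univ F"
  shows "\<exists>C\<in>Age L ar F. isomorphic L ar (induced F X) C"
proof -
  obtain h where h: "bij_betw h {0..<card X} X" using ex_bij_betw_nat_finite[OF assms(1)] by blast
  define C :: "(nat, 'b) struct" where "C = ({0..<card X}, \<lambda>R xs. rel F R (map h xs))"
  have uC: "univ C = {0..<card X}" and rC: "rel C = (\<lambda>R xs. rel F R (map h xs))"
    by (simp_all add: C_def univ_def rel_def)
  have "is_embedding L ar C F h"
    using h assms(2) unfolding is_embedding_def uC rC by (auto simp: bij_betw_def)
  then have "C \<in> Age L ar F" using uC by (auto simp: Age_def)
  moreover have "is_iso L ar C (induced F X) h" using h unfolding is_iso_def uC rC by auto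
  moreover have "isomorphic L ar C (induced F X)" using calculation(2) unfolding isomorphic_def by blast
  ultimately show ?thesis using isomorphic_sym[of L ar C "induced F X"] by blast
qed


definition slice :: "nat \<Rightarrow> (nat \<times> 'a) set \<Rightarrow> 'a set" where
  "slice i S = {x. (i, x) \<in> S}"

lemma univ_In[simp]: "univ (In_struct lt n T) = {..<n} \<times> univ T"
  by (simp add: In_struct_def univ_def)

lemma rel_In_Inr[simp]: "rel (In_struct lt n T) (Inr i) xs = (case xs of [p] \<Rightarrow> fst p = i | _ \<Rightarrow> False)"
  by (simp add: In_struct_def rel_def)

lemma rel_In_lt[simp]: "rel (In_struct lt n T) (Inl lt) xs =
  (case xs of [p, q] \<Rightarrow> fst p < fst q \<or> (fst p = fst q \<and> rel T lt [snd p, snd q]) | _ \<Rightarrow> False)"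
  by (simp add: In_struct_def rel_def)

lemma rel_In_other[simp]: "R \<noteq> lt \<Longrightarrow> rel (In_struct lt n T) (Inl R) xs =
  ((\<forall>p\<in>set xs. \<forall>q\<in>set xs. fst p = fst q) \<and> rel T R (map snd xs))"
  by (simp add: In_struct_def rel_def)

lemma In_ar_simps[simp]: "In_ar ar (Inl R) = ar R" "In_ar ar (Inr i) = 1"
  by (simp_all add: In_ar_def)

lemma In_lang_simps[simp]: "Inl R \<in> In_lang L n \<longleftrightarrow> R \<in> L" "Inr i \<in> In_lang L n \<longleftrightarrow> i < n"
  by (auto simp: In_lang_def)

lemma length2_cases: "length xs = 2 \<Longrightarrow> \<exists>a b. xs = [a, b]"
  by (cases xs; cases "tl xs"; auto)

lemma length1_cases: "length xs = Suc 0 \<Longrightarrow> \<exists>a. xs = [a]"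
  by (cases xs; auto)

lemma PI:
  assumes lt: "lt \<in> L" "ar lt = 2"
    and S: "S \<subseteq> univ (In_struct lt n T)" and Y: "Y \<subseteq> univ (In_struct lt n T)"
  shows "is_iso (In_lang L n) (In_ar ar) (induced (In_struct lt n T) S) (induced (In_struct lt n T) Y) f
     \<longleftrightarrow> (\<forall>p\<in>S. fst (f p) = fst p) \<and>
         (\<forall>i<n. is_iso L ar (induced T (slice i S)) (induced T (slice i Y)) (\<lambda>x. snd (f (i, x))))"
    (is "?L \<longleftrightarrow> ?F \<and> ?G")
proof
  assume iso: ?L
  let ?I = "In_struct lt n T"
  have bij: "bij_betw f S Y" using iso by (simp add: is_iso_def)
  have relI: "\<And>R xs. R \<in> In_lang L n \<Longrightarrow> length xs = In_ar ar R \<Longrightarrow> set xs \<subseteq> S \<Longrightarrow>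
      rel ?I R xs \<longleftrightarrow> rel ?I R (map f xs)"
    using iso by (simp add: is_iso_def)
  have F: ?F
  proof
    fix p assume p: "p \<in> S"
    then have "fst p < n" using S by auto
    then show "fst (f p) = fst p" using relI[of "Inr (fst p)" "[p]"] p by simp
  qed
  have fpair: "(i, snd (f (i, x))) = f (i, x)" if "(i, x) \<in> S" for i x
    using F that by (metis fst_conv prod.collapse)
  show "?F \<and> ?G"
  proof (intro conjI F allI impI)
    fix i assume i: "i < n"
    let ?g = "\<lambda>x. snd (f (i, x))"
    have "bij_betw ?g (slice i S) (slice i Y)"
      unfolding bij_betw_def
    proof
      show "inj_on ?g (slice i S)"
      proof (rule inj_onI)
        fix x y assume x: "x \<in> slice i S" and y: "y \<in> slice i S" and e: "?g x = ?g y"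
        have xS: "(i, x) \<in> S" and yS: "(i, y) \<in> S" using x y by (simp_all add: slice_def)
        have "f (i, x) = f (i, y)" using fpair[OF xS] fpair[OF yS] e by metis
        then show "x = y" using bij xS yS by (auto simp: bij_betw_def dest: inj_onD)
      qed
      show "?g ` slice i S = slice i Y"
      proof
        show "?g ` slice i S \<subseteq> slice i Y"
        proof
          fix y assume "y \<in> ?g ` slice i S"
          then obtain x where x: "(i, x) \<in> S" and y: "y = ?g x" by (auto simp: slice_def)
          have "f (i, x) \<in> Y" using x bij by (auto simp: bij_betw_def)
          then have "(i, ?g x) \<in> Y" using fpair[OF x] by simp
          then show "y \<in> slice i Y" using y by (simp add: slice_def)
        qed
        show "slice i Y \<subseteq> ?g ` slice i S"
        proof
          fix y assume "y \<in> slice i Y"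
          then have "(i, y) \<in> f ` S" using bij by (simp add: slice_def bij_betw_def)
          then obtain p where p: "p \<in> S" "f p = (i, y)" by auto
          then have "fst p = i" using F by (metis fst_conv)
          then have pe: "p = (i, snd p)" by auto
          then have "(i, snd p) \<in> S" using p by metis
          then have "snd p \<in> slice i S" by (simp add: slice_def)
          moreover have "?g (snd p) = y" using p pe by (metis snd_conv)
          ultimately show "y \<in> ?g ` slice i S" by blast
        qed
      qed
    qed
    moreover have "rel T R xs \<longleftrightarrow> rel T R (map ?g xs)"
      if R: "R \<in> L" and xs: "length xs = ar R" "set xs \<subseteq> slice i S" for R xs
    proof -
      let ?ps = "map (Pair i) xs"
      have ps: "set ?ps \<subseteq> S" using xs by (auto simp: slice_def)
      have mf: "map f ?ps = map (Pair i) (map ?g xs)"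
      proof -
        have "map f ?ps = map (\<lambda>x. f (i, x)) xs" by simp
        also have "\<dots> = map (\<lambda>x. (i, ?g x)) xs"
          by (rule map_cong[OF refl]) (use xs fpair in \<open>auto simp: slice_def\<close>)
        finally show ?thesis by simp
      qed
      have eq: "rel ?I (Inl R) ?ps \<longleftrightarrow> rel ?I (Inl R) (map f ?ps)"
        using relI[of "Inl R" ?ps] R xs ps by simp
      show ?thesis
      proof (cases "R = lt")
        case True
        then obtain a b where "xs = [a, b]" using xs lt length2_cases by metis
        then show ?thesis using eq True unfolding mf by simp
      next
        case False
        then show ?thesis using eq unfolding mf by (simp add: comp_def)
      qed
    qed
    ultimately show "is_iso L ar (induced T (slice i S)) (induced T (slice i Y)) ?g"
      unfolding is_iso_def by auto
  qed
next
  assume H: "?F \<and> ?G"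
  let ?I = "In_struct lt n T"
  have F: ?F and G: ?G using H by auto
  let ?g = "\<lambda>i x. snd (f (i, x))"
  have gp: "?g (fst p) (snd p) = snd (f p)" for p by simp
  have Fp: "p \<in> S \<Longrightarrow> fst (f p) = fst p" for p using F by blast
  have Gb: "\<And>i. i < n \<Longrightarrow> bij_betw (?g i) (slice i S) (slice i Y)" using G by (simp add: is_iso_def)
  have Gr: "\<And>i R xs. i < n \<Longrightarrow> R \<in> L \<Longrightarrow> length xs = ar R \<Longrightarrow> set xs \<subseteq> slice i S \<Longrightarrow>
      rel T R xs \<longleftrightarrow> rel T R (map (?g i) xs)" using G by (simp add: is_iso_def)
  have fstn: "p \<in> S \<Longrightarrow> fst p < n" for p using S by auto
  have bij: "bij_betw f S Y"
    unfolding bij_betw_def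
  proof (intro conjI)
    show "inj_on f S"
    proof (rule inj_onI)
      fix p q assume p: "p \<in> S" and q: "q \<in> S" and e: "f p = f q"
      have fq: "fst p = fst q" using e F p q by metis
      have sp: "snd p \<in> slice (fst p) S" "snd q \<in> slice (fst p) S" using p q fq by (auto simp: slice_def) (metis prod.collapse)
      have "?g (fst p) (snd p) = ?g (fst p) (snd q)" using e fq gp[of p] gp[of q] by simp
      moreover have "inj_on (?g (fst p)) (slice (fst p) S)" using Gb[OF fstn[OF p]] by (simp add: bij_betw_def)
      ultimately have "snd p = snd q" using sp inj_onD by metis
      then show "p = q" using fq by (simp add: prod_eq_iff)
    qed
    show "f ` S = Y"
    proof
      show "f ` S \<subseteq> Y"
      proof
        fix y assume "y \<in> f ` S"
        then obtain p where p: "p \<in> S" and y: "y = f p" by auto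
        have "snd p \<in> slice (fst p) S" using p by (simp add: slice_def)
        moreover have "?g (fst p) ` slice (fst p) S = slice (fst p) Y" using Gb[OF fstn[OF p]] by (simp add: bij_betw_def)
        ultimately have "?g (fst p) (snd p) \<in> slice (fst p) Y" by blast
        then have "snd (f p) \<in> slice (fst (f p)) Y" unfolding gp Fp[OF p] .
        then have "(fst (f p), snd (f p)) \<in> Y" unfolding slice_def by simp
        then show "y \<in> Y" using y by simp
      qed
      show "Y \<subseteq> f ` S"
      proof
        fix y assume y: "y \<in> Y"
        then have i: "fst y < n" using Y by auto
        have sy: "snd y \<in> slice (fst y) Y" using y by (simp add: slice_def)
        have eq: "?g (fst y) ` slice (fst y) S = slice (fst y) Y" using Gb[OF i] by (simp add: bij_betw_def)
        have "snd y \<in> ?g (fst y) ` slice (fst y) S" using sy unfolding eq .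
        then obtain x where x1: "snd y = ?g (fst y) x" and x2: "x \<in> slice (fst y) S" by (rule imageE)
        have x: "x \<in> slice (fst y) S" "?g (fst y) x = snd y" using x1 x2 by simp_all
        then have "(fst y, x) \<in> S" by (simp add: slice_def)
        moreover have "f (fst y, x) = y" using Fp[OF \<open>(fst y, x) \<in> S\<close>] x by (simp add: prod_eq_iff)
        ultimately show "y \<in> f ` S" by force
      qed
    qed
  qed
  show ?L
    unfolding is_iso_def
  proof (intro conjI ballI allI impI)
    show "bij_betw f (univ (induced ?I S)) (univ (induced ?I Y))" using bij by simp
    fix R xs assume R: "R \<in> In_lang L n" and xs: "length xs = In_ar ar R \<and> set xs \<subseteq> univ (induced ?I S)"
    have xsS: "set xs \<subseteq> S" using xs by simp
    show "rel (induced ?I S) R xs = rel (induced ?I Y) R (map f xs)"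
    proof (cases R)
      case (Inr j)
      then obtain p where xp: "xs = [p]" using xs length1_cases by force
      then have "p \<in> S" using xsS by simp
      then show ?thesis using Inr xp Fp[of p] by simp
    next
      case (Inl R')
      then have R': "R' \<in> L" using R by simp
      show ?thesis
      proof (cases "R' = lt")
        case True
        then obtain p q where pq: "xs = [p, q]" using xs lt Inl length2_cases by force
        have p: "p \<in> S" and q: "q \<in> S" using xsS pq by auto
        have key: "rel T lt [snd p, snd q] \<longleftrightarrow> rel T lt [snd (f p), snd (f q)]" if e: "fst p = fst q"
        proof -
          have qq: "(fst p, snd q) \<in> S" using q e by simp
          have sl: "set [snd p, snd q] \<subseteq> slice (fst p) S" using p qq by (simp add: slice_def)
          have "rel T lt [snd p, snd q] \<longleftrightarrow> rel T lt (map (?g (fst p)) [snd p, snd q])"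
            using Gr[OF fstn[OF p] lt(1) _ sl] lt(2) by simp
          moreover have "?g (fst p) (snd p) = snd (f p)" by simp
          moreover have "?g (fst p) (snd q) = snd (f q)" using e by simp
          ultimately show ?thesis by simp
        qed
        show ?thesis using Inl True pq Fp[OF p] Fp[OF q] key by auto
      next
        case False
        have same: "(\<forall>p\<in>set (map f xs). \<forall>q\<in>set (map f xs). fst p = fst q) \<longleftrightarrow>
                    (\<forall>p\<in>set xs. \<forall>q\<in>set xs. fst p = fst q)"
        proof -
          have fe: "\<forall>p\<in>set xs. fst (f p) = fst p" using Fp xsS by blast
          have "(\<forall>p\<in>set (map f xs). \<forall>q\<in>set (map f xs). fst p = fst q) \<longleftrightarrow>
                (\<forall>p\<in>set xs. \<forall>q\<in>set xs. fst (f p) = fst (f q))" by simp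
          also have "\<dots> \<longleftrightarrow> (\<forall>p\<in>set xs. \<forall>q\<in>set xs. fst p = fst q)" using fe by simp
          finally show ?thesis .
        qed
        have lhs: "rel (induced ?I S) R xs = ((\<forall>p\<in>set xs. \<forall>q\<in>set xs. fst p = fst q) \<and> rel T R' (map snd xs))"
          by (simp only: Inl rel_induced rel_In_other[OF False])
        have rhs: "rel (induced ?I Y) R (map f xs) = ((\<forall>p\<in>set (map f xs). \<forall>q\<in>set (map f xs). fst p = fst q) \<and> rel T R' (map snd (map f xs)))"
          by (simp only: Inl rel_induced rel_In_other[OF False])
        show ?thesis
        proof (cases "(\<forall>p\<in>set xs. \<forall>q\<in>set xs. fst p = fst q) \<and> xs \<noteq> []")
          case True
          then obtain p0 where p0: "p0 \<in> set xs" by (cases xs) auto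
          define i where "i = fst p0"
          have allp: "\<forall>p\<in>set xs. fst p = i" using True p0 unfolding i_def by blast
          have i: "i < n" using fstn p0 xsS unfolding i_def by blast
          have sl: "set (map snd xs) \<subseteq> slice i S"
          proof
            fix x assume "x \<in> set (map snd xs)"
            then obtain p where p: "p \<in> set xs" "x = snd p" by auto
            then have "(i, x) = p" using allp by (metis prod.collapse)
            then show "x \<in> slice i S" using p xsS by (auto simp: slice_def)
          qed
          have m: "map snd (map f xs) = map (?g i) (map snd xs)"
          proof -
            have "map snd (map f xs) = map (\<lambda>p. snd (f p)) xs" by simp
            also have "\<dots> = map (\<lambda>p. ?g i (snd p)) xs"
            proof (rule map_cong[OF refl])
              fix p assume "p \<in> set xs"
              then have "(i, snd p) = p" using allp by (metis prod.collapse)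
              then show "snd (f p) = ?g i (snd p)" by simp
            qed
            finally show ?thesis by simp
          qed
          have hR: "rel T R' (map snd xs) \<longleftrightarrow> rel T R' (map (?g i) (map snd xs))"
            using Gr[OF i R' _ sl] xs Inl by simp
          show ?thesis unfolding lhs rhs same m hR by (rule refl)
        next
          case False2: False
          show ?thesis
          proof (cases "xs = []")
            case True
            then show ?thesis by simp
          next
            case False
            then have "\<not> (\<forall>p\<in>set xs. \<forall>q\<in>set xs. fst p = fst q)" using False2 by blast
            then show ?thesis unfolding lhs rhs same by blast
          qed
        qed
      qed
    qed
  qed
qed


definition ProdS :: "'r set \<Rightarrow> ('r \<Rightarrow> nat) \<Rightarrow> ('a, 'r) struct \<Rightarrow> nat \<Rightarrow> (nat \<Rightarrow> 'a set) \<Rightarrow> (nat \<Rightarrow> 'a set) \<Rightarrow> (nat \<times> 'a) set set" where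
  "ProdS L ar T m X XA = {S. S \<subseteq> {..<m} \<times> UNIV \<and>
     (\<forall>i<m. slice i S \<in> binom L ar (induced T (X i)) (induced T (XA i)))}"

lemma binom_induced: "binom L ar (induced T X) A = {S. S \<subseteq> X \<and> isomorphic L ar (induced T S) A}"
  by (simp add: binom_def)

lemma binom_mono: "Y \<subseteq> X \<Longrightarrow> binom L ar (induced T Y) A \<subseteq> binom L ar (induced T X) A"
  unfolding binom_induced by auto

lemma binom_sub: "S \<in> binom L ar (induced T X) A \<Longrightarrow> S \<subseteq> X"
  unfolding binom_induced by auto

lemma ProdS_cong: "(\<And>i. i < m \<Longrightarrow> X i = X' i) \<Longrightarrow> ProdS L ar T m X XA = ProdS L ar T m X' XA"
  unfolding ProdS_def by auto

lemma ProdS_mono: "ProdS L ar T m Y XA \<subseteq> ProdS L ar T m X XA" if YX: "\<And>i. i < m \<Longrightarrow> Y i \<subseteq> X i"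
proof
  fix S assume S: "S \<in> ProdS L ar T m Y XA"
  have "slice i S \<in> binom L ar (induced T (X i)) (induced T (XA i))" if i: "i < m" for i
  proof -
    have "slice i S \<in> binom L ar (induced T (Y i)) (induced T (XA i))" using S i unfolding ProdS_def by blast
    then show ?thesis using binom_mono[of "Y i" "X i" L ar T "induced T (XA i)"] YX[OF i] by blast
  qed
  then show "S \<in> ProdS L ar T m X XA" using S unfolding ProdS_def by blast
qed

lemma ProdS_sub: "S \<in> ProdS L ar T m X XA \<Longrightarrow> S \<subseteq> Sigma {..<m} X"
proof
  fix p assume S: "S \<in> ProdS L ar T m X XA" and p: "p \<in> S"
  then have m: "fst p < m" unfolding ProdS_def by auto
  have "snd p \<in> slice (fst p) S" using p by (simp add: slice_def)
  moreover have "slice (fst p) S \<subseteq> X (fst p)" using S m binom_sub unfolding ProdS_def by blast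
  ultimately show "p \<in> Sigma {..<m} X" using m by (cases p) auto
qed

lemma finite_Prod: "finite (ProdS L ar T m X XA)" if "\<And>i. i < m \<Longrightarrow> finite (X i)"
proof (rule finite_subset[of _ "Pow (Sigma {..<m} X)"])
  show "ProdS L ar T m X XA \<subseteq> Pow (Sigma {..<m} X)" using ProdS_sub by blast
  show "finite (Pow (Sigma {..<m} X))" using that by auto
qed

lemma slice_Un_Times: "slice i (S \<union> {m} \<times> s) = (if i = m then slice i S \<union> s else slice i S)"
  by (auto simp: slice_def)

lemma ProdS_extend:
  assumes S: "S \<in> ProdS L ar T m X XA" and s: "s \<in> binom L ar (induced T (X m)) (induced T (XA m))"
  shows "S \<union> {m} \<times> s \<in> ProdS L ar T (Suc m) X XA"
proof -
  have Sm: "S \<subseteq> {..<m} \<times> UNIV" using S by (simp add: ProdS_def)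
  then have e: "slice m S = {}" by (auto simp: slice_def)
  show ?thesis
    unfolding ProdS_def
  proof (intro CollectI conjI allI impI)
    show "S \<union> {m} \<times> s \<subseteq> {..<Suc m} \<times> UNIV" using Sm by auto
    fix i assume "i < Suc m"
    then show "slice i (S \<union> {m} \<times> s) \<in> binom L ar (induced T (X i)) (induced T (XA i))"
      using S s e unfolding slice_Un_Times ProdS_def by (cases "i = m") auto
  qed
qed

lemma ProdS_split:
  assumes S': "S' \<in> ProdS L ar T (Suc m) X XA"
  shows "{p \<in> S'. fst p < m} \<in> ProdS L ar T m X XA"
    and "slice m S' \<in> binom L ar (induced T (X m)) (induced T (XA m))"
    and "S' = {p \<in> S'. fst p < m} \<union> {m} \<times> slice m S'"
proof -
  have sub: "S' \<subseteq> {..<Suc m} \<times> UNIV" using S' by (simp add: ProdS_def)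
  have sl: "i < m \<Longrightarrow> slice i {p \<in> S'. fst p < m} = slice i S'" for i by (auto simp: slice_def)
  show "{p \<in> S'. fst p < m} \<in> ProdS L ar T m X XA"
    using S' sl unfolding ProdS_def by auto
  show "slice m S' \<in> binom L ar (induced T (X m)) (induced T (XA m))"
    using S' unfolding ProdS_def by auto
  show "S' = {p \<in> S'. fst p < m} \<union> {m} \<times> slice m S'"
  proof
    show "S' \<subseteq> {p \<in> S'. fst p < m} \<union> {m} \<times> slice m S'"
    proof
      fix p assume p: "p \<in> S'"
      then have "fst p < Suc m" using sub by auto
      then show "p \<in> {p \<in> S'. fst p < m} \<union> {m} \<times> slice m S'"
        using p by (cases p) (auto simp: slice_def less_Suc_eq)
    qed
    show "{p \<in> S'. fst p < m} \<union> {m} \<times> slice m S' \<subseteq> S'" by (auto simp: slice_def)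
  qed
qed

lemma PL:
  assumes RT: "\<And>k XA XB. k \<ge> 1 \<Longrightarrow> finite XA \<Longrightarrow> XA \<subseteq> univ T \<Longrightarrow> finite XB \<Longrightarrow> XB \<subseteq> univ T \<Longrightarrow>
      \<exists>XC. finite XC \<and> XC \<subseteq> univ T \<and> arrows L ar (induced T XC) (induced T XB) (induced T XA) k"
    and fin: "\<And>i. finite (XA i) \<and> XA i \<subseteq> univ T \<and> finite (XB i) \<and> XB i \<subseteq> univ T"
  shows "k \<ge> 1 \<Longrightarrow> \<exists>XC. (\<forall>i<m. finite (XC i) \<and> XC i \<subseteq> univ T) \<and>
     (\<forall>c :: (nat \<times> 'a) set \<Rightarrow> nat. (\<forall>S\<in>ProdS L ar T m XC XA. c S < k) \<longrightarrow>
        (\<exists>XB'. (\<forall>i<m. XB' i \<in> binom L ar (induced T (XC i)) (induced T (XB i))) \<and>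
               (\<exists>j. \<forall>S\<in>ProdS L ar T m XB' XA. c S = j)))"
proof (induction m arbitrary: k)
  case 0
  have P0: "ProdS L ar T 0 X XA = {{}}" for X by (auto simp: ProdS_def)
  show ?case by (rule exI[of _ "\<lambda>_. {}"]) (auto simp: P0)
next
  case (Suc m)
  have k: "1 \<le> k" by fact
  obtain XC where XCfin: "\<forall>i<m. finite (XC i) \<and> XC i \<subseteq> univ T"
    and XCprop: "\<forall>c :: (nat \<times> 'a) set \<Rightarrow> nat. (\<forall>S\<in>ProdS L ar T m XC XA. c S < k) \<longrightarrow>
        (\<exists>XB'. (\<forall>i<m. XB' i \<in> binom L ar (induced T (XC i)) (induced T (XB i))) \<and>
               (\<exists>j. \<forall>S\<in>ProdS L ar T m XB' XA. c S = j))"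
    using Suc.IH[OF k] by blast
  define P where "P = ProdS L ar T m XC XA"
  have finP: "finite P" unfolding P_def using XCfin by (intro finite_Prod) auto
  define F where "F = PiE P (\<lambda>_. {..<k})"
  have finF: "finite F" unfolding F_def using finP by (simp add: finite_PiE)
  have "(\<lambda>S\<in>P. 0) \<in> F" unfolding F_def using k by auto
  then have cardF: "card F \<ge> 1" using finF by (metis One_nat_def Suc_leI card_gt_0_iff empty_iff)
  obtain enc where enc: "bij_betw enc F {0..<card F}" using ex_bij_betw_finite_nat[OF finF] by blast
  obtain XCm where XCm: "finite XCm" "XCm \<subseteq> univ T"
    and arr: "arrows L ar (induced T XCm) (induced T (XB m)) (induced T (XA m)) (card F)"
    using RT[OF cardF, of "XA m" "XB m"] fin[of m] by auto
  define XC' where "XC' = XC(m := XCm)"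
  have PXC': "ProdS L ar T m XC' XA = P" unfolding P_def XC'_def by (rule ProdS_cong) simp
  have XC'm: "XC' m = XCm" by (simp add: XC'_def)
  show ?case
  proof (rule exI[of _ XC'], rule conjI)
    show "\<forall>i<Suc m. finite (XC' i) \<and> XC' i \<subseteq> univ T"
    proof (intro allI impI)
      fix i assume "i < Suc m"
      then show "finite (XC' i) \<and> XC' i \<subseteq> univ T"
        using XCfin XCm unfolding XC'_def by (cases "i = m") auto
    qed
  next
    show "\<forall>c :: (nat \<times> 'a) set \<Rightarrow> nat. (\<forall>S\<in>ProdS L ar T (Suc m) XC' XA. c S < k) \<longrightarrow>
        (\<exists>XB'. (\<forall>i<Suc m. XB' i \<in> binom L ar (induced T (XC' i)) (induced T (XB i))) \<and>
               (\<exists>j. \<forall>S\<in>ProdS L ar T (Suc m) XB' XA. c S = j))"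
    proof (intro allI impI)
    fix c :: "(nat \<times> 'a) set \<Rightarrow> nat"
    assume cb: "\<forall>S\<in>ProdS L ar T (Suc m) XC' XA. c S < k"
    let ?BA = "\<lambda>Z. binom L ar (induced T Z) (induced T (XA m))"
    have ext: "S \<in> P \<Longrightarrow> s \<in> ?BA XCm \<Longrightarrow> c (S \<union> {m} \<times> s) < k" for S s
      using cb ProdS_extend[of S L ar T m XC' XA s] PXC' XC'm by auto
    define v where "v s = restrict (\<lambda>S. c (S \<union> {m} \<times> s)) P" for s
    have vF: "s \<in> ?BA XCm \<Longrightarrow> v s \<in> F" for s
      unfolding v_def F_def using ext by auto
    define c' where "c' s = enc (v s)" for s
    have "\<forall>s\<in>binom L ar (induced T XCm) (induced T (XA m)). c' s < card F"
      using vF enc unfolding c'_def by (auto simp: bij_betw_def)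
    then have "\<exists>B'\<in>binom L ar (induced T XCm) (induced T (XB m)). \<exists>i. \<forall>S\<in>binom L ar (induced (induced T XCm) B') (induced T (XA m)). c' S = i"
      using arr unfolding arrows_def by blast
    then obtain Bm j' where Bm: "Bm \<in> binom L ar (induced T XCm) (induced T (XB m))"
      and Bj: "\<forall>s\<in>?BA Bm. c' s = j'"
      by auto
    have BmX: "Bm \<subseteq> XCm" using Bm binom_sub by blast
    have BAmono: "?BA Bm \<subseteq> ?BA XCm" using binom_mono[OF BmX] .
    define s0 where "s0 = (SOME s. s \<in> ?BA Bm)"
    define d where "d S = (if \<exists>s. s \<in> ?BA Bm then c (S \<union> {m} \<times> s0) else 0)" for S
    have "\<forall>S\<in>ProdS L ar T m XC XA. d S < k"
    proof
      fix S assume S: "S \<in> ProdS L ar T m XC XA"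
      show "d S < k"
      proof (cases "\<exists>s. s \<in> ?BA Bm")
        case True
        then have "s0 \<in> ?BA Bm" unfolding s0_def by (rule someI_ex)
        then show ?thesis using ext[of S s0] S BAmono True unfolding d_def P_def by auto
      next
        case False
        then show ?thesis using k unfolding d_def by simp
      qed
    qed
    then obtain XB'' j where XB'': "\<forall>i<m. XB'' i \<in> binom L ar (induced T (XC i)) (induced T (XB i))"
      and dj: "\<forall>S\<in>ProdS L ar T m XB'' XA. d S = j"
      using XCprop by blast
    define XB' where "XB' = XB''(m := Bm)"
    show "\<exists>XB'. (\<forall>i<Suc m. XB' i \<in> binom L ar (induced T (XC' i)) (induced T (XB i))) \<and>
               (\<exists>j. \<forall>S\<in>ProdS L ar T (Suc m) XB' XA. c S = j)"
    proof (rule exI[of _ XB'], intro conjI exI[of _ j] allI impI ballI)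
      fix i assume "i < Suc m"
      then show "XB' i \<in> binom L ar (induced T (XC' i)) (induced T (XB i))"
        using XB'' Bm unfolding XB'_def XC'_def by (cases "i = m") auto
    next
      fix S' assume S': "S' \<in> ProdS L ar T (Suc m) XB' XA"
      define S where "S = {p \<in> S'. fst p < m}"
      define s where "s = slice m S'"
      have SP'': "S \<in> ProdS L ar T m XB'' XA"
        using ProdS_split(1)[OF S'] unfolding S_def
        using ProdS_cong[of m XB' XB'' L ar T XA] unfolding XB'_def by auto
      have s: "s \<in> ?BA Bm" using ProdS_split(2)[OF S'] unfolding s_def XB'_def by simp
      have S'eq: "S' = S \<union> {m} \<times> s" using ProdS_split(3)[OF S'] unfolding S_def s_def .
      have ex: "\<exists>s. s \<in> ?BA Bm" using s by blast
      then have s0: "s0 \<in> ?BA Bm" unfolding s0_def by (rule someI_ex)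
      have "c' s = c' s0" using Bj s s0 by simp
      then have vv: "v s = v s0" using enc vF s s0 BAmono unfolding c'_def bij_betw_def inj_on_def by blast
      have SP: "S \<in> P"
      proof -
        have "ProdS L ar T m XB'' XA \<subseteq> ProdS L ar T m XC XA"
          by (rule ProdS_mono) (use XB'' binom_sub in blast)
        then show ?thesis using SP'' unfolding P_def by blast
      qed
      have "c (S \<union> {m} \<times> s) = v s S" using SP by (simp add: v_def)
      also have "\<dots> = v s0 S" using vv by simp
      also have "\<dots> = c (S \<union> {m} \<times> s0)" using SP by (simp add: v_def)
      also have "\<dots> = d S" unfolding d_def using ex by simp
      also have "\<dots> = j" using dj SP'' by blast
      finally show "c S' = j" using S'eq by simp
    qed
    qed
  qed
qed


lemma finite_slice: "finite Y \<Longrightarrow> finite (slice i Y)"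
proof -
  assume "finite Y"
  moreover have "slice i Y \<subseteq> snd ` Y" by (force simp: slice_def)
  ultimately show ?thesis by (meson finite_imageI finite_subset)
qed

lemma slice_sub_univ: "Y \<subseteq> univ (In_struct lt n T) \<Longrightarrow> slice i Y \<subseteq> univ T"
  by (auto simp: slice_def)

lemma slice_Sigma: "i < n \<Longrightarrow> slice i (Sigma {..<n} X) = X i"
  by (auto simp: slice_def)

lemma BC:
  assumes lt: "lt \<in> L" "ar lt = 2"
    and Y: "Y \<subseteq> univ (In_struct lt n T)" and YA: "YA \<subseteq> univ (In_struct lt n T)"
  shows "binom (In_lang L n) (In_ar ar) (induced (In_struct lt n T) Y) (induced (In_struct lt n T) YA)
       = ProdS L ar T n (\<lambda>i. slice i Y) (\<lambda>i. slice i YA)"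
proof
  let ?I = "In_struct lt n T"
  show "binom (In_lang L n) (In_ar ar) (induced ?I Y) (induced ?I YA) \<subseteq> ProdS L ar T n (\<lambda>i. slice i Y) (\<lambda>i. slice i YA)"
  proof
    fix S assume "S \<in> binom (In_lang L n) (In_ar ar) (induced ?I Y) (induced ?I YA)"
    then have SY: "S \<subseteq> Y" and iso: "isomorphic (In_lang L n) (In_ar ar) (induced ?I S) (induced ?I YA)"
      by (simp_all add: binom_induced)
    obtain f where f: "is_iso (In_lang L n) (In_ar ar) (induced ?I S) (induced ?I YA) f"
      using iso unfolding isomorphic_def by blast
    have S: "S \<subseteq> univ ?I" using SY Y by blast
    have G: "\<forall>i<n. is_iso L ar (induced T (slice i S)) (induced T (slice i YA)) (\<lambda>x. snd (f (i, x)))"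
      using PI[where L=L and ar=ar and lt=lt, OF lt S YA] f by blast
    have "S \<subseteq> {..<n} \<times> UNIV" using S by auto
    moreover have "slice i S \<in> binom L ar (induced T (slice i Y)) (induced T (slice i YA))" if "i < n" for i
    proof -
      have "slice i S \<subseteq> slice i Y" using SY by (auto simp: slice_def)
      moreover have "isomorphic L ar (induced T (slice i S)) (induced T (slice i YA))"
        using G that unfolding isomorphic_def by blast
      ultimately show ?thesis by (simp add: binom_induced)
    qed
    ultimately show "S \<in> ProdS L ar T n (\<lambda>i. slice i Y) (\<lambda>i. slice i YA)" by (simp add: ProdS_def)
  qed
  show "ProdS L ar T n (\<lambda>i. slice i Y) (\<lambda>i. slice i YA) \<subseteq> binom (In_lang L n) (In_ar ar) (induced ?I Y) (induced ?I YA)"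
  proof
    fix S assume S: "S \<in> ProdS L ar T n (\<lambda>i. slice i Y) (\<lambda>i. slice i YA)"
    have Sn: "S \<subseteq> {..<n} \<times> UNIV" using S by (simp add: ProdS_def)
    have Sb: "\<And>i. i < n \<Longrightarrow> slice i S \<in> binom L ar (induced T (slice i Y)) (induced T (slice i YA))"
      using S by (simp add: ProdS_def)
    define gg where "gg i = (SOME g. is_iso L ar (induced T (slice i S)) (induced T (slice i YA)) g)" for i
    have gg: "is_iso L ar (induced T (slice i S)) (induced T (slice i YA)) (gg i)" if "i < n" for i
    proof -
      have "\<exists>g. is_iso L ar (induced T (slice i S)) (induced T (slice i YA)) g"
        using Sb[OF that] unfolding binom_induced isomorphic_def by blast
      then show ?thesis unfolding gg_def by (rule someI_ex)
    qed
    define f where "f p = (fst p, gg (fst p) (snd p))" for p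
    have SY: "S \<subseteq> Y"
    proof
      fix p assume p: "p \<in> S"
      then have i: "fst p < n" using Sn by auto
      have "snd p \<in> slice (fst p) S" using p by (simp add: slice_def)
      then have "snd p \<in> slice (fst p) Y" using binom_sub[OF Sb[OF i]] by blast
      then show "p \<in> Y" by (simp add: slice_def)
    qed
    then have Su: "S \<subseteq> univ ?I" using Y by blast
    have "is_iso (In_lang L n) (In_ar ar) (induced ?I S) (induced ?I YA) f"
    proof (subst PI[where L=L and ar=ar and lt=lt, OF lt Su YA], intro conjI ballI allI impI)
      fix p assume "p \<in> S" then show "fst (f p) = fst p" by (simp add: f_def)
    next
      fix i assume i: "i < n"
      have "(\<lambda>x. snd (f (i, x))) = gg i" by (simp add: f_def)
      then show "is_iso L ar (induced T (slice i S)) (induced T (slice i YA)) (\<lambda>x. snd (f (i, x)))"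
        using gg[OF i] by simp
    qed
    then have "isomorphic (In_lang L n) (In_ar ar) (induced ?I S) (induced ?I YA)"
      unfolding isomorphic_def by blast
    then show "S \<in> binom (In_lang L n) (In_ar ar) (induced ?I Y) (induced ?I YA)"
      using SY by (simp add: binom_induced)
  qed
qed

lemma RT_from_ramsey:
  assumes R: "ramsey_property L ar (Age L ar T)"
    and k: "k \<ge> 1" and A: "finite XA" "XA \<subseteq> univ T" and B: "finite XB" "XB \<subseteq> univ T"
  shows "\<exists>XC. finite XC \<and> XC \<subseteq> univ T \<and> arrows L ar (induced T XC) (induced T XB) (induced T XA) k"
proof -
  obtain A' where A': "A' \<in> Age L ar T" "isomorphic L ar (induced T XA) A'"
    using finite_sub_in_Age[OF A] by blast
  obtain B' where B': "B' \<in> Age L ar T" "isomorphic L ar (induced T XB) B'"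
    using finite_sub_in_Age[OF B] by blast
  obtain C where C: "C \<in> Age L ar T" and arr: "arrows L ar C B' A' k"
    using R k A'(1) B'(1) unfolding ramsey_property_def by blast
  obtain e where e: "is_embedding L ar C T e" and fC: "finite (univ C)"
    using C unfolding Age_def by blast
  define XC where "XC = e ` univ C"
  have "arrows L ar (induced T XC) B' A' k"
    using arrows_transfer[OF embedding_iso[OF e] arr] unfolding XC_def .
  then have "arrows L ar (induced T XC) (induced T XB) (induced T XA) k"
    using arrows_cong_iso isomorphic_sym[OF A'(2)] isomorphic_sym[OF B'(2)] by blast
  moreover have "finite XC" using fC unfolding XC_def by simp
  moreover have "XC \<subseteq> univ T" using e unfolding XC_def is_embedding_def by blast
  ultimately show ?thesis by blast
qed

theorem theorem6p1:
  fixes L :: "'r set" and ar :: "'r \<Rightarrow> nat" and E lt :: 'r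
    and Tstar :: "('a, 'r) struct" and n :: nat
  assumes "countable L" and "E \<in> L" and "lt \<in> L" and "E \<noteq> lt"
    and "ar E = 2" and "ar lt = 2"
    and "countable (univ Tstar)"
    and "tournament E Tstar"
    and "homogeneous {E} ar Tstar"
    and "linear_order_rel lt Tstar"
    and "ramsey_property L ar (Age L ar Tstar)"
    and "n > 0"
  shows "ramsey_property (In_lang L n) (In_ar ar)
           (Age (In_lang L n) (In_ar ar) (In_struct lt n Tstar))"
proof -
  let ?I = "In_struct lt n Tstar"
  let ?L = "In_lang L n" and ?ar = "In_ar ar"
  have lt: "lt \<in> L" "ar lt = 2" using assms by auto
  have RT: "\<And>k XA XB. k \<ge> 1 \<Longrightarrow> finite XA \<Longrightarrow> XA \<subseteq> univ Tstar \<Longrightarrow> finite XB \<Longrightarrow> XB \<subseteq> univ Tstar \<Longrightarrow>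
      \<exists>XC. finite XC \<and> XC \<subseteq> univ Tstar \<and> arrows L ar (induced Tstar XC) (induced Tstar XB) (induced Tstar XA) k"
    using RT_from_ramsey[OF assms(11)] by blast
  show ?thesis
    unfolding ramsey_property_def
  proof (intro allI impI ballI)
    fix k :: nat and A B
    assume k: "1 \<le> k" and A: "A \<in> Age ?L ?ar ?I" and B: "B \<in> Age ?L ?ar ?I"
    obtain eA where eA: "is_embedding ?L ?ar A ?I eA" and fA: "finite (univ A)" using A unfolding Age_def by blast
    obtain eB where eB: "is_embedding ?L ?ar B ?I eB" and fB: "finite (univ B)" using B unfolding Age_def by blast
    define YA where "YA = eA ` univ A"
    define YB where "YB = eB ` univ B"
    have YAu: "YA \<subseteq> univ ?I" using eA unfolding YA_def is_embedding_def by blast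
    have YBu: "YB \<subseteq> univ ?I" using eB unfolding YB_def is_embedding_def by blast
    have fYA: "finite YA" using fA unfolding YA_def by simp
    have fYB: "finite YB" using fB unfolding YB_def by simp
    have "isomorphic ?L ?ar A (induced ?I YA)"
      using embedding_iso[OF eA] unfolding YA_def isomorphic_def by blast
    then have isoA: "isomorphic ?L ?ar (induced ?I YA) A" by (rule isomorphic_sym)
    have "isomorphic ?L ?ar B (induced ?I YB)"
      using embedding_iso[OF eB] unfolding YB_def isomorphic_def by blast
    then have isoB: "isomorphic ?L ?ar (induced ?I YB) B" by (rule isomorphic_sym)
    define XA where "XA i = slice i YA" for i
    define XB where "XB i = slice i YB" for i
    have fin: "\<And>i. finite (XA i) \<and> XA i \<subseteq> univ Tstar \<and> finite (XB i) \<and> XB i \<subseteq> univ Tstar"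
      unfolding XA_def XB_def using finite_slice[OF fYA] finite_slice[OF fYB] slice_sub_univ[OF YAu] slice_sub_univ[OF YBu] by blast
    have "\<exists>XC. (\<forall>i<n. finite (XC i) \<and> XC i \<subseteq> univ Tstar) \<and>
      (\<forall>c :: (nat \<times> 'a) set \<Rightarrow> nat. (\<forall>S\<in>ProdS L ar Tstar n XC XA. c S < k) \<longrightarrow>
        (\<exists>XB'. (\<forall>i<n. XB' i \<in> binom L ar (induced Tstar (XC i)) (induced Tstar (XB i))) \<and>
               (\<exists>j. \<forall>S\<in>ProdS L ar Tstar n XB' XA. c S = j)))"
      by (rule PL[where L=L and ar=ar and T=Tstar and XA=XA and XB=XB and m=n, OF RT fin k])
    then obtain XC where XCfin: "\<forall>i<n. finite (XC i) \<and> XC i \<subseteq> univ Tstar"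
      and XCprop: "\<forall>c :: (nat \<times> 'a) set \<Rightarrow> nat. (\<forall>S\<in>ProdS L ar Tstar n XC XA. c S < k) \<longrightarrow>
        (\<exists>XB'. (\<forall>i<n. XB' i \<in> binom L ar (induced Tstar (XC i)) (induced Tstar (XB i))) \<and>
               (\<exists>j. \<forall>S\<in>ProdS L ar Tstar n XB' XA. c S = j))"
      by blast
    define YC where "YC = Sigma {..<n} XC"
    have YCu: "YC \<subseteq> univ ?I" using XCfin unfolding YC_def by auto
    have fYC: "finite YC" using XCfin unfolding YC_def by (intro finite_SigmaI) auto
    have binC: "binom ?L ?ar (induced ?I YC) (induced ?I Z) = ProdS L ar Tstar n XC (\<lambda>i. slice i Z)"
      if "Z \<subseteq> univ ?I" for Z
    proof -
      have sC: "ProdS L ar Tstar n (\<lambda>i. slice i YC) W = ProdS L ar Tstar n XC W" for W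
        by (rule ProdS_cong) (simp add: YC_def slice_Sigma)
      show ?thesis using BC[where L=L and ar=ar and lt=lt, OF lt YCu that] unfolding sC .
    qed
    have arr: "arrows ?L ?ar (induced ?I YC) (induced ?I YB) (induced ?I YA) k"
      unfolding arrows_def
    proof (intro allI impI)
      fix c :: "(nat \<times> 'a) set \<Rightarrow> nat"
      assume cb: "\<forall>S\<in>binom ?L ?ar (induced ?I YC) (induced ?I YA). c S < k"
      then have "\<forall>S\<in>ProdS L ar Tstar n XC XA. c S < k" using binC[OF YAu] unfolding XA_def by simp
      then obtain XB' j where XB': "\<forall>i<n. XB' i \<in> binom L ar (induced Tstar (XC i)) (induced Tstar (XB i))"
        and cj: "\<forall>S\<in>ProdS L ar Tstar n XB' XA. c S = j"
        using XCprop by blast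
      define B' where "B' = Sigma {..<n} XB'"
      have XB'C: "\<And>i. i < n \<Longrightarrow> XB' i \<subseteq> XC i" using XB' binom_sub by blast
      have B'u: "B' \<subseteq> univ ?I" using XB'C XCfin unfolding B'_def by fastforce
      have "B' \<in> ProdS L ar Tstar n XC (\<lambda>i. slice i YB)"
        unfolding ProdS_def B'_def using XB' unfolding XB_def by (auto simp: slice_Sigma)
      then have B'in: "B' \<in> binom ?L ?ar (induced ?I YC) (induced ?I YB)" using binC[OF YBu] by simp
      have "binom ?L ?ar (induced (induced ?I YC) B') (induced ?I YA) = ProdS L ar Tstar n XB' XA"
      proof -
        have sB: "ProdS L ar Tstar n (\<lambda>i. slice i B') W = ProdS L ar Tstar n XB' W" for W
          by (rule ProdS_cong) (simp add: B'_def slice_Sigma)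
        show ?thesis using BC[where L=L and ar=ar and lt=lt, OF lt B'u YAu] unfolding sB XA_def induced_induced .
      qed
      then show "\<exists>B'\<in>binom ?L ?ar (induced ?I YC) (induced ?I YB). \<exists>i. \<forall>S\<in>binom ?L ?ar (induced (induced ?I YC) B') (induced ?I YA). c S = i"
        using B'in cj by auto
    qed
    obtain C where C: "C \<in> Age ?L ?ar ?I" and isoC: "isomorphic ?L ?ar (induced ?I YC) C"
      using finite_sub_in_Age[OF fYC YCu] by blast
    obtain g where g: "is_iso ?L ?ar (induced ?I YC) C g" using isoC unfolding isomorphic_def by blast
    have "arrows ?L ?ar C (induced ?I YB) (induced ?I YA) k" by (rule arrows_transfer[OF g arr])
    then have "arrows ?L ?ar C B A k" by (rule arrows_cong_iso[OF _ isoB isoA])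
    then show "\<exists>C\<in>Age ?L ?ar ?I. arrows ?L ?ar C B A k" using C by blast
  qed
qed

end
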